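(* Assume all hypotheses (i)–(v) of the following setting hold: (i) $(x,y)$ follow the IMCA model with parameters $(h,T,\lambda,\mu)$; (ii) $h:\mathbb{R}^d\to\mathbb{R}^d$ is invertible; (iii) each $T_i$ is differentiable and satisfies the strong exponential condition; (iv) there exist $k+1$ points $y^0,\dots,y^k$ with $L=\big(\lambda(y^1)-\lambda(y^0),\dots,\lambda(y^k)-\lambda(y^0)\big)$ invertible; (v) there are $f:\mathbb{R}^d\to\mathbb{R}^d$, differentiable $H_l:\mathbb{R}\to\mathbb{R}^{m_l}$ with $(m_1,\dots,m_d)$ a permutation of $(k_1,\dots,k_d)$, and $g:\mathcal{Y}\to\mathbb{R}^k$ with $\exp(-H(f(x))^\top g(y))/Z(y)=p(x\mid y)$ for all $x,y$, where $H(f(x))=(H_1(f_1(x)),\dots,H_d(f_d(x)))$. Assume further either (A) each $T_l$ is twice differentiable with $k_l\ge 2$ for all $l$, and both $h$ and $f$ are $\mathcal{D}^2$-diffeomorphisms; or (B) $k_l=1$ and $T_l$ is non-monotonic for all $l$, $h$ and $f$ are $C^1$-diffeomorphisms, and each $H_l$ has a unique extremum. Then there exist a permutation $\gamma$ of $\{1,\dots,d\}$ with $m_i=k_{\gamma(i)}$, invertible square matrices $A_i$ and vectors $b_i$ such that for every $i$ and every $x$, $H_i(f_i(x))=A_iT_{\gamma(i)}(z_{\gamma(i)})+b_i$, where $z=h^{-1}(x)$.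
   Context: IMCA model: a latent $z\in\mathbb{R}^d$ and an observed auxiliary variable $y\in\mathcal{Y}\subset\mathbb{R}^{d_y}$, with $z\sim p(z\mid y)$ and observation $x=h(z)$, where $p(z\mid y)=\mu(z)\exp\big(\sum_{i=1}^d T_i(z_i)^\top\lambda_i(y)-\Gamma(y)\big)$; here $\mu$ is an arbitrary (not necessarily factorized) base measure density, $T_i:\mathbb{R}\to\mathbb{R}^{k_i}$ are sufficient statistics, $\lambda_i:\mathcal{Y}\to\mathbb{R}^{k_i}$, $\Gamma(y)$ is the log-normalizer, $k=\sum_i k_i$, $T=(T_1,\dots,T_d)$, $\lambda=(\lambda_1,\dots,\lambda_d)$ stacked into $\mathbb{R}^k$. The strong exponential condition for $T_i$: for every measurable $U\subset\mathbb{R}$ and every $\eta\in\mathbb{R}^{k_i}$, if $u\mapsto T_i(u)^\top\eta$ is constant on $U$, then $U$ has Lebesgue measure zero or $\eta=0$. A $\mathcal{D}^2$-diffeomorphism is an invertible map such that all second-order cross-derivatives of the map and its inverse exist. *)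

theory Defs
  imports "HOL-Analysis.Analysis" "HOL-Probability.Probability"
begin

text \<open>Block representation of vectors in R^k: a vector of R^k = R^(k_1+...+k_d) is
  represented as a family of blocks a i :: nat => real, of which only the entries j < n i
  of block i are meaningful.\<close>
definition blk_ip :: "('d::finite \<Rightarrow> nat) \<Rightarrow> ('d \<Rightarrow> nat \<Rightarrow> real) \<Rightarrow> ('d \<Rightarrow> nat \<Rightarrow> real) \<Rightarrow> real" where
  "blk_ip n a b = (\<Sum>i\<in>UNIV. \<Sum>j<n i. a i j * b i j)"

text \<open>The k x k matrix L whose columns (l = 1..K, K = sum of the n i) are the block vectors
  c l is invertible: it has a two-sided inverse matrix M (rows l = 1..K).\<close>
definition blk_matrix_invertible :: "('d::finite \<Rightarrow> nat) \<Rightarrow> (nat \<Rightarrow> 'd \<Rightarrow> nat \<Rightarrow> real) \<Rightarrow> bool" where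
  "blk_matrix_invertible n c =
    (let K = (\<Sum>i\<in>UNIV. n i) in
     \<exists>M :: nat \<Rightarrow> 'd \<Rightarrow> nat \<Rightarrow> real.
       (\<forall>i j i' j'. j < n i \<longrightarrow> j' < n i' \<longrightarrow>
          (\<Sum>l\<in>{1..K}. c l i j * M l i' j') = (if i = i' \<and> j = j' then 1 else 0)) \<and>
       (\<forall>l\<in>{1..K}. \<forall>l'\<in>{1..K}.
          (\<Sum>i\<in>UNIV. \<Sum>j<n i. M l i j * c l' i j) = (if l = l' then 1 else 0)))"

definition sq_invertible :: "nat \<Rightarrow> (nat \<Rightarrow> nat \<Rightarrow> real) \<Rightarrow> bool" where
  "sq_invertible n A =
    (\<exists>B. \<forall>j<n. \<forall>l<n. (\<Sum>r<n. A j r * B r l) = (if j = l then 1 else 0) \<and>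
                      (\<Sum>r<n. B j r * A r l) = (if j = l then 1 else 0))"

definition strong_exp_cond :: "nat \<Rightarrow> (real \<Rightarrow> nat \<Rightarrow> real) \<Rightarrow> bool" where
  "strong_exp_cond kk Ti =
    (\<forall>(U::real set) (\<eta>::nat \<Rightarrow> real). U \<in> sets lebesgue \<longrightarrow>
       (\<exists>c. \<forall>u\<in>U. (\<Sum>j<kk. Ti u j * \<eta> j) = c) \<longrightarrow>
       emeasure lebesgue U = 0 \<or> (\<forall>j<kk. \<eta> j = 0))"

definition vec_differentiable :: "nat \<Rightarrow> (real \<Rightarrow> nat \<Rightarrow> real) \<Rightarrow> bool" where
  "vec_differentiable n F = (\<forall>j<n. \<forall>u. (\<lambda>v. F v j) differentiable (at u))"

definition vec_twice_differentiable :: "nat \<Rightarrow> (real \<Rightarrow> nat \<Rightarrow> real) \<Rightarrow> bool" where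
  "vec_twice_differentiable n F =
    (\<forall>j<n. \<exists>F'. (\<forall>u. ((\<lambda>v. F v j) has_real_derivative F' u) (at u)) \<and>
                (\<forall>u. F' differentiable (at u)))"

definition C1_map :: "(real^'d \<Rightarrow> real^'d) \<Rightarrow> bool" where
  "C1_map G = (\<exists>J :: real^'d \<Rightarrow> real^'d^'d.
      (\<forall>x. (G has_derivative (\<lambda>v. J x *v v)) (at x)) \<and> continuous_on UNIV J)"

definition C1_diffeo :: "(real^'d \<Rightarrow> real^'d) \<Rightarrow> bool" where
  "C1_diffeo F = (bij F \<and> C1_map F \<and> C1_map (inv F))"

definition has_partial :: "(real^'d \<Rightarrow> real^'d) \<Rightarrow> 'd \<Rightarrow> 'd \<Rightarrow> real^'d \<Rightarrow> real \<Rightarrow> bool" where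
  "has_partial G a i x D = (((\<lambda>t. G (x + t *\<^sub>R axis i 1) $ a) has_real_derivative D) (at 0))"

definition second_cross_derivs_exist :: "(real^'d \<Rightarrow> real^'d) \<Rightarrow> bool" where
  "second_cross_derivs_exist G =
    (\<forall>a i j. i \<noteq> j \<longrightarrow>
       (\<exists>P. (\<forall>x. has_partial G a i x (P x)) \<and>
            (\<forall>x. \<exists>D. ((\<lambda>t. P (x + t *\<^sub>R axis j 1)) has_real_derivative D) (at 0))))"

definition D2_diffeo :: "(real^'d \<Rightarrow> real^'d) \<Rightarrow> bool" where
  "D2_diffeo F = (bij F \<and> (\<forall>x. F differentiable (at x)) \<and> (\<forall>x. inv F differentiable (at x)) \<and>
      second_cross_derivs_exist F \<and> second_cross_derivs_exist (inv F))"

definition is_local_extremum :: "(real \<Rightarrow> real) \<Rightarrow> real \<Rightarrow> bool" where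
  "is_local_extremum \<phi> u =
    ((\<exists>e>0. \<forall>v. \<bar>v - u\<bar> < e \<longrightarrow> \<phi> v \<le> \<phi> u) \<or> (\<exists>e>0. \<forall>v. \<bar>v - u\<bar> < e \<longrightarrow> \<phi> u \<le> \<phi> v))"

definition has_unique_extremum :: "(real \<Rightarrow> real) \<Rightarrow> bool" where
  "has_unique_extremum \<phi> = (\<exists>!u. is_local_extremum \<phi> u)"

end

theory Submission
  imports Defs "Jordan_Normal_Form.Determinant"
begin

no_notation vec_index (infixl "$" 100)
unbundle no m_inv_syntax


lemma sumS: "(\<Sum>p\<in>(SIGMA i:(UNIV::'d::finite set). {..<(n i::nat)}). F p) = (\<Sum>i\<in>UNIV. \<Sum>j<n i. F (i,j))"
  by (subst sum.Sigma) (auto simp add: split_def)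

lemma blk_ip_Sigma: "blk_ip n a b = (\<Sum>p\<in>(SIGMA i:UNIV. {..<n i}). a (fst p) (snd p) * b (fst p) (snd p))"
  unfolding blk_ip_def sumS by simp

lemma emeasure_lebesgue_Icc: "(a::real) \<le> b \<Longrightarrow> emeasure lebesgue {a..b} = ennreal (b - a)"
proof -
  assume "a \<le> b"
  have "{a..b} \<in> sets lborel" by simp
  then have "emeasure lebesgue {a..b} = emeasure lborel {a..b}"
    by (simp add: emeasure_completion main_part_sets)
  then show ?thesis using \<open>a \<le> b\<close> by simp
qed

lemma strong_exp_Icc:
  assumes "strong_exp_cond n F" "a < b" "\<forall>t\<in>{a..b}. (\<Sum>l<n. F t l * \<beta> l) = c"
  shows "\<forall>l<n. \<beta> l = 0"
proof -
  have "{a..b} \<in> sets lebesgue" by simp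
  moreover have "emeasure lebesgue {a..b} \<noteq> 0" using assms(2) emeasure_lebesgue_Icc[of a b] by simp
  ultimately show ?thesis using assms(1,3) unfolding strong_exp_cond_def by blast
qed

lemma strong_exp_const:
  assumes "strong_exp_cond n F" "\<forall>t. (\<Sum>l<n. F t l * \<beta> l) = c"
  shows "\<forall>l<n. \<beta> l = 0"
  using strong_exp_Icc[OF assms(1), of 0 1 \<beta> c] assms(2) by simp

lemma deriv_zero_coeffs:
  assumes "strong_exp_cond n F"
    and der: "\<forall>l<n. \<forall>t. ((\<lambda>v. F v l) has_real_derivative F' l t) (at t)"
    and z: "\<forall>t. (\<Sum>l<n. F' l t * \<beta> l) = 0"
  shows "\<forall>l<n. \<beta> l = 0"
proof -
  define G where "G t = (\<Sum>l<n. F t l * \<beta> l)" for t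
  have "\<forall>t. (G has_real_derivative 0) (at t)"
  proof
    fix t
    have "(G has_real_derivative (\<Sum>l<n. F' l t * \<beta> l)) (at t)"
      unfolding G_def using der by (auto intro!: DERIV_sum DERIV_cmult_right)
    then show "(G has_real_derivative 0) (at t)" using z by simp
  qed
  then have "\<forall>t. G t = G 0" using DERIV_isconst_all by blast
  then show ?thesis using strong_exp_const[OF assms(1), of \<beta> "G 0"] unfolding G_def by simp
qed

lemma kernel_sep:
  fixes T :: "'d::finite \<Rightarrow> real \<Rightarrow> nat \<Rightarrow> real"
  assumes se: "\<forall>i. strong_exp_cond (k i) (T i)"
    and c: "\<forall>z::real^'d. (\<Sum>c\<in>UNIV. \<Sum>l<k c. \<eta> c l * T c (z $ c) l) = E"
  shows "\<forall>c. \<forall>l<k c. \<eta> c l = 0"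
proof (rule allI)
  fix i
  define R where "R = (\<Sum>c\<in>UNIV-{i}. \<Sum>l<k c. \<eta> c l * T c 0 l)"
  have "\<forall>t. (\<Sum>l<k i. T i t l * \<eta> i l) = E - R"
  proof
    fix t
    define z where "z = (\<chi> c. if c = i then t else (0::real))"
    have "E = (\<Sum>c\<in>UNIV. \<Sum>l<k c. \<eta> c l * T c (z $ c) l)" using c by simp
    also have "\<dots> = (\<Sum>l<k i. \<eta> i l * T i (z $ i) l) + (\<Sum>c\<in>UNIV-{i}. \<Sum>l<k c. \<eta> c l * T c (z $ c) l)"
      by (simp add: sum.remove)
    also have "(\<Sum>c\<in>UNIV-{i}. \<Sum>l<k c. \<eta> c l * T c (z $ c) l) = R"
      unfolding R_def z_def by (intro sum.cong) auto
    finally show "(\<Sum>l<k i. T i t l * \<eta> i l) = E - R" unfolding z_def by (simp add: mult.commute)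
  qed
  then show "\<forall>l<k i. \<eta> i l = 0" using strong_exp_const se by blast
qed

lemma ae_cont_eq:
  fixes f g :: "'a::euclidean_space \<Rightarrow> real"
  assumes "continuous_on UNIV f" "continuous_on UNIV g" "AE x in lborel. f x = g x"
  shows "f x = g x"
proof (rule ccontr)
  assume ne: "f x \<noteq> g x"
  define U where "U = {x. f x \<noteq> g x}"
  have oU: "open U" unfolding U_def using assms(1,2) by (rule open_Collect_neq)
  have "U \<in> sets lborel" using oU by simp
  then have "U \<in> null_sets lborel" using assms(3) AE_iff_null[of lborel "\<lambda>x. f x = g x"] unfolding U_def by simp
  then have "U \<in> null_sets lebesgue" by (simp add: null_sets_completionI)
  then have "negligible U" by (simp add: negligible_iff_null_sets)
  moreover have "U \<noteq> {}" using ne unfolding U_def by auto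
  ultimately show False using open_not_negligible oU by blast
qed



lemma cont_ennreal_meas:
  assumes "continuous_on UNIV (f::'a::euclidean_space \<Rightarrow> real)"
  shows "(\<lambda>x. ennreal (f x)) \<in> borel_measurable M \<Longrightarrow> True" "(\<lambda>x. ennreal (f x)) \<in> borel_measurable lborel"
proof -
  have "f \<in> borel_measurable borel" by (rule borel_measurable_continuous_onI[OF assms])
  then show "(\<lambda>x. ennreal (f x)) \<in> borel_measurable lborel" by measurable
qed simp

lemma dens_ratio:
  fixes h :: "'a::euclidean_space \<Rightarrow> 'a"
  assumes bij: "bij h" and ch: "continuous_on UNIV h" and chi: "continuous_on UNIV (inv h)"
    and q0m: "q0 \<in> borel_measurable borel" and rc: "continuous_on UNIV r"
    and q1: "\<forall>z. q1 z = q0 z * r z" and rnn: "\<forall>z. r z \<ge> 0" and q0nn: "\<forall>z. q0 z \<ge> 0"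
    and p0c: "continuous_on UNIV p0" and p1c: "continuous_on UNIV p1"
    and p0nn: "\<forall>x. p0 x \<ge> 0" and p1nn: "\<forall>x. p1 x \<ge> 0"
    and e0: "distr (density lborel (\<lambda>z. ennreal (q0 z))) lborel h = density lborel (\<lambda>x. ennreal (p0 x))"
    and e1: "distr (density lborel (\<lambda>z. ennreal (q1 z))) lborel h = density lborel (\<lambda>x. ennreal (p1 x))"
  shows "p1 x = p0 x * r (inv h x)"
proof -
  have hm: "h \<in> lborel \<rightarrow>\<^sub>M lborel" using ch by (simp add: borel_measurable_continuous_onI)
  have rihc: "continuous_on UNIV (\<lambda>x. r (inv h x))"
    using continuous_on_compose[OF chi, of r] rc by (simp add: comp_def continuous_on_subset)
  define g where "g x = ennreal (r (inv h x))" for x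
  have gm: "g \<in> borel_measurable lborel" unfolding g_def
    using cont_ennreal_meas(2)[OF rihc] .
  have rm: "(\<lambda>z. ennreal (r z)) \<in> borel_measurable lborel" using cont_ennreal_meas(2)[OF rc] .
  have q0m': "(\<lambda>z. ennreal (q0 z)) \<in> borel_measurable lborel" using q0m by simp
  have p0m: "(\<lambda>z. ennreal (p0 z)) \<in> borel_measurable lborel" using cont_ennreal_meas(2)[OF p0c] .
  have p1m: "(\<lambda>z. ennreal (p1 z)) \<in> borel_measurable lborel" using cont_ennreal_meas(2)[OF p1c] .
  have d1: "density lborel (\<lambda>z. ennreal (q1 z)) = density (density lborel (\<lambda>z. ennreal (q0 z))) (\<lambda>z. ennreal (r z))"
    by (subst density_density_eq[OF q0m' rm]) (simp add: q1 q0nn rnn ennreal_mult)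
  have ghx: "g (h x) = ennreal (r x)" for x unfolding g_def using bij by (simp add: bij_is_inj)
  have hm': "h \<in> density lborel (\<lambda>z. ennreal (q0 z)) \<rightarrow>\<^sub>M lborel"
    using hm by (simp add: measurable_cong_sets[OF sets_density refl])
  have "density lborel (\<lambda>x. ennreal (p1 x)) = distr (density (density lborel (\<lambda>z. ennreal (q0 z))) (\<lambda>x. g (h x))) lborel h"
    using e1 d1 ghx by simp
  also have "\<dots> = density (distr (density lborel (\<lambda>z. ennreal (q0 z))) lborel h) g"
    using density_distr[OF _ hm', of g] gm by simp
  also have "\<dots> = density lborel (\<lambda>x. ennreal (p0 x) * g x)"
    using e0 density_density_eq[OF p0m gm] by simp
  finally have "AE y in lborel. ennreal (p1 y) = ennreal (p0 y) * g y"
    using sigma_finite_measure.density_unique[OF sigma_finite_lborel p1m] p0m gm by auto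
  then have ae: "AE y in lborel. p1 y = p0 y * r (inv h y)"
    by eventually_elim (simp add: g_def p0nn p1nn rnn ennreal_mult[symmetric])
  show ?thesis
    by (rule ae_cont_eq[OF p1c _ ae]) (intro continuous_intros p0c rihc)
qed



lemma LA_inverse:
  fixes B :: "'p \<Rightarrow> 'q \<Rightarrow> real"
  assumes finP: "finite P" and finQ: "finite Q" and card: "card P = card Q"
    and ker: "\<And>\<eta>. (\<forall>q\<in>Q. (\<Sum>p\<in>P. \<eta> p * B p q) = 0) \<Longrightarrow> \<forall>p\<in>P. \<eta> p = 0"
  shows "\<exists>C. (\<forall>p\<in>P. \<forall>p'\<in>P. (\<Sum>q\<in>Q. B p q * C q p') = (if p = p' then 1 else 0)) \<and>
             (\<forall>q\<in>Q. \<forall>q'\<in>Q. (\<Sum>p\<in>P. C q p * B p q') = (if q = q' then 1 else 0))"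
proof -
  define n where "n = card P"
  obtain ep where ep: "bij_betw ep {0..<n} P" using ex_bij_betw_nat_finite[OF finP] n_def by blast
  obtain eq where eq: "bij_betw eq {0..<n} Q" using ex_bij_betw_nat_finite[OF finQ] n_def card by metis
  define ip where "ip = inv_into {0..<n} ep"
  define iq where "iq = inv_into {0..<n} eq"
  have ip1: "\<And>r. r < n \<Longrightarrow> ip (ep r) = r" unfolding ip_def using ep
    by (simp add: bij_betw_inv_into_left)
  have ip2: "\<And>p. p \<in> P \<Longrightarrow> ep (ip p) = p \<and> ip p < n" unfolding ip_def using ep
    by (metis atLeastLessThan_iff bij_betw_inv_into_right bij_betw_def inv_into_into)
  have iq1: "\<And>r. r < n \<Longrightarrow> iq (eq r) = r" unfolding iq_def using eq
    by (simp add: bij_betw_inv_into_left)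
  have iq2: "\<And>p. p \<in> Q \<Longrightarrow> eq (iq p) = p \<and> iq p < n" unfolding iq_def using eq
    by (metis atLeastLessThan_iff bij_betw_inv_into_right bij_betw_def inv_into_into)
  have sP: "\<And>F. (\<Sum>p\<in>P. F p) = (\<Sum>r<n. F (ep r))"
    using sum.reindex_bij_betw[OF ep] by (metis atLeast0LessThan)
  have sQ: "\<And>F. (\<Sum>p\<in>Q. F p) = (\<Sum>r<n. F (eq r))"
    using sum.reindex_bij_betw[OF eq] by (metis atLeast0LessThan)
  define Bm where "Bm = mat n n (\<lambda>(r,s). B (ep r) (eq s))"
  have Bc: "Bm \<in> carrier_mat n n" unfolding Bm_def by simp
  have "Determinant.det Bm \<noteq> 0"
  proof
    assume "Determinant.det Bm = 0"
    then have "Determinant.det (transpose_mat Bm) = 0" using Bc by (simp add: det_transpose)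
    then obtain v where v: "v \<in> carrier_vec n" "v \<noteq> 0\<^sub>v n" "transpose_mat Bm *\<^sub>v v = 0\<^sub>v n"
      using det_0_iff_vec_prod_zero_field[of "transpose_mat Bm" n] Bc by auto
    define \<eta> where "\<eta> p = vec_index v (ip p)" for p
    have "\<forall>q\<in>Q. (\<Sum>p\<in>P. \<eta> p * B p q) = 0"
    proof
      fix q assume q: "q \<in> Q"
      have "(\<Sum>p\<in>P. \<eta> p * B p q) = (\<Sum>r<n. vec_index v r * B (ep r) (eq (iq q)))"
        unfolding \<eta>_def by (subst sP) (simp add: ip1 iq2[OF q])
      also have "\<dots> = vec_index (transpose_mat Bm *\<^sub>v v) (iq q)"
        using iq2[OF q] v(1) unfolding Bm_def
        by (auto simp: mult_mat_vec_def scalar_prod_def mult.commute intro!: sum.cong)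
      also have "\<dots> = 0" using v(3) iq2[OF q] by simp
      finally show "(\<Sum>p\<in>P. \<eta> p * B p q) = 0" .
    qed
    then have "\<forall>p\<in>P. \<eta> p = 0" by (rule ker)
    then have "\<forall>r<n. vec_index v r = 0" unfolding \<eta>_def using ip1 ep
      by (metis atLeastLessThan_iff bij_betw_apply zero_le)
    then have "v = 0\<^sub>v n" using v(1) by (intro eq_vecI) auto
    then show False using v(2) by simp
  qed
  then have "Bm \<in> Units (ring_mat TYPE(real) n undefined)" by (rule det_non_zero_imp_unit[OF Bc])
  then obtain Cm where Cm: "Cm \<in> carrier_mat n n" "Cm * Bm = 1\<^sub>m n" "Bm * Cm = 1\<^sub>m n"
    unfolding Units_def ring_mat_def by (auto simp del: mult_mat_vec_carrier)
  define C where "C q p = Cm $$ (iq q, ip p)" for q p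
  show ?thesis
  proof (intro exI conjI ballI)
    fix p p' assume p: "p \<in> P" and p': "p' \<in> P"
    have "(\<Sum>q\<in>Q. B p q * C q p') = (\<Sum>s<n. Bm $$ (ip p, s) * Cm $$ (s, ip p'))"
      unfolding sQ C_def Bm_def using ip2[OF p] ip2[OF p'] iq1 by simp
    also have "\<dots> = (Bm * Cm) $$ (ip p, ip p')"
      using Cm(1) Bc ip2[OF p] ip2[OF p'] by (simp add: times_mat_def scalar_prod_def atLeast0LessThan)
    also have "\<dots> = (if ip p = ip p' then 1 else 0)" using Cm(3) ip2[OF p] ip2[OF p'] by simp
    also have "\<dots> = (if p = p' then 1 else 0)" using ip2[OF p] ip2[OF p'] by metis
    finally show "(\<Sum>q\<in>Q. B p q * C q p') = (if p = p' then 1 else 0)" .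
  next
    fix q q' assume q: "q \<in> Q" and q': "q' \<in> Q"
    have "(\<Sum>p\<in>P. C q p * B p q') = (\<Sum>s<n. Cm $$ (iq q, s) * Bm $$ (s, iq q'))"
      unfolding sP C_def Bm_def using iq2[OF q] iq2[OF q'] ip1 by simp
    also have "\<dots> = (Cm * Bm) $$ (iq q, iq q')"
      using Cm(1) Bc iq2[OF q] iq2[OF q'] by (simp add: times_mat_def scalar_prod_def atLeast0LessThan)
    also have "\<dots> = (if iq q = iq q' then 1 else 0)" using Cm(2) iq2[OF q] iq2[OF q'] by simp
    also have "\<dots> = (if q = q' then 1 else 0)" using iq2[OF q] iq2[OF q'] by metis
    finally show "(\<Sum>p\<in>P. C q p * B p q') = (if q = q' then 1 else 0)" .
  qed
qed


lemma cont_blk: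
  assumes "\<forall>i. \<forall>j<n i. continuous_on UNIV (\<lambda>z. F z i j)"
  shows "continuous_on UNIV (\<lambda>z. blk_ip n (F z) v)"
  unfolding blk_ip_def using assms by (intro continuous_on_sum continuous_on_mult continuous_on_const) auto

lemma blk_ip_diff: "blk_ip n a (\<lambda>i j. b i j - b' i j) = blk_ip n a b - blk_ip n a b'"
  unfolding blk_ip_def by (simp add: right_diff_distrib sum_subtractf)

lemma comp_cont_vec:
  assumes "continuous_on UNIV (\<lambda>v::real. G v)" "continuous_on UNIV (f :: real^'d \<Rightarrow> real^'d)"
  shows "continuous_on UNIV (\<lambda>x. G (f x $ i))"
proof -
  have "continuous_on UNIV (\<lambda>x. f x $ i)" using assms(2) by (intro continuous_intros)
  then show ?thesis using continuous_on_compose[of UNIV "\<lambda>x. f x $ i" G] assms(1)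
    by (simp add: comp_def continuous_on_subset)
qed

lemma Zpos:
  fixes h :: "'a::euclidean_space \<Rightarrow> 'a"
  assumes hm: "h \<in> borel_measurable borel" and Fi: "integrable lborel F" and Fp: "integral\<^sup>L lborel F > 0"
    and Fnn: "\<forall>z. F z \<ge> 0" and q: "\<forall>z. q z = F z * c" and c: "c > 0" and p: "\<forall>x. p x > 0"
    and e: "distr (density lborel (\<lambda>z. ennreal (q z))) lborel h = density lborel (\<lambda>x. ennreal (p x / Z))"
  shows "Z > 0"
proof (rule ccontr)
  assume "\<not> Z > 0"
  then have "\<forall>x. p x / Z \<le> 0" using p by (meson divide_nonneg_nonpos less_imp_le not_less)
  then have "\<forall>x. ennreal (p x / Z) = 0" by (simp add: ennreal_eq_0_iff)
  then have z0: "emeasure (density lborel (\<lambda>x. ennreal (p x / Z))) UNIV = 0"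
    by (simp add: emeasure_density)
  have Fm: "F \<in> borel_measurable lborel" using Fi by (rule borel_measurable_integrable)
  have "emeasure (distr (density lborel (\<lambda>z. ennreal (q z))) lborel h) UNIV
      = emeasure (density lborel (\<lambda>z. ennreal (q z))) UNIV"
    using hm by (subst emeasure_distr) auto
  also have "\<dots> = (\<integral>\<^sup>+z. ennreal (q z) \<partial>lborel)"
    using Fm q by (subst emeasure_density) auto
  also have "\<dots> = (\<integral>\<^sup>+z. ennreal c * ennreal (F z) \<partial>lborel)"
    using q c Fnn by (intro nn_integral_cong) (simp add: ennreal_mult mult.commute)
  also have "\<dots> = ennreal c * (\<integral>\<^sup>+z. ennreal (F z) \<partial>lborel)"
    using Fm by (simp add: nn_integral_cmult)
  also have "\<dots> = ennreal c * ennreal (integral\<^sup>L lborel F)"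
    using Fi Fnn by (subst nn_integral_eq_integral) auto
  also have "\<dots> > 0" using c Fp by (simp add: ennreal_mult[symmetric])
  finally show False using e z0 by simp
qed



lemma main_identity:
  fixes h f :: "real^'d::finite \<Rightarrow> real^'d"
    and k m :: "'d \<Rightarrow> nat"
    and T :: "'d \<Rightarrow> real \<Rightarrow> nat \<Rightarrow> real"
    and lam :: "'d \<Rightarrow> 'y::euclidean_space \<Rightarrow> nat \<Rightarrow> real"
    and \<mu> :: "real^'d \<Rightarrow> real"
    and \<Gamma> :: "'y \<Rightarrow> real"
    and Y :: "'y set"
    and H :: "'d \<Rightarrow> real \<Rightarrow> nat \<Rightarrow> real"
    and g :: "'d \<Rightarrow> 'y \<Rightarrow> nat \<Rightarrow> real"
    and Z :: "'y \<Rightarrow> real"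
  assumes mu_meas: "\<mu> \<in> borel_measurable lborel"
    and mu_nonneg: "\<forall>z. \<mu> z \<ge> 0"
    and normaliser: "\<forall>y\<in>Y.
        integrable lborel (\<lambda>z. \<mu> z * exp (blk_ip k (\<lambda>i. T i (z $ i)) (\<lambda>i. lam i y))) \<and>
        (LINT z|lborel. \<mu> z * exp (blk_ip k (\<lambda>i. T i (z $ i)) (\<lambda>i. lam i y))) > 0 \<and>
        \<Gamma> y = ln (LINT z|lborel. \<mu> z * exp (blk_ip k (\<lambda>i. T i (z $ i)) (\<lambda>i. lam i y)))"
    and h_inv: "bij h"
    and model_x: "\<forall>y\<in>Y.
        distr (density lborel (\<lambda>z. ennreal (\<mu> z * exp (blk_ip k (\<lambda>i. T i (z $ i)) (\<lambda>i. lam i y) - \<Gamma> y))))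
              lborel h
        = density lborel (\<lambda>x. ennreal (exp (- blk_ip m (\<lambda>i. H i (f x $ i)) (\<lambda>i. g i y)) / Z y))"
    and hc: "continuous_on UNIV h" and hic: "continuous_on UNIV (inv h)" and fc: "continuous_on UNIV f"
    and Tc: "\<forall>i. \<forall>j<k i. continuous_on UNIV (\<lambda>v. T i v j)"
    and Hc: "\<forall>i. \<forall>j<m i. continuous_on UNIV (\<lambda>v. H i v j)"
    and y0: "y0 \<in> Y" and y1: "y1 \<in> Y"
  shows "\<exists>\<kappa>. \<forall>z. blk_ip k (\<lambda>i. T i (z $ i)) (\<lambda>i j. lam i y1 j - lam i y0 j)
            = - blk_ip m (\<lambda>i. H i (f (h z) $ i)) (\<lambda>i j. g i y1 j - g i y0 j) + \<kappa>"
proof -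
  define aT where "aT z y = blk_ip k (\<lambda>i. T i (z $ i)) (\<lambda>i. lam i y)" for z y
  define bH where "bH x y = blk_ip m (\<lambda>i. H i (f x $ i)) (\<lambda>i. g i y)" for x y
  define F where "F y z = \<mu> z * exp (aT z y)" for y z
  define q where "q y z = \<mu> z * exp (aT z y - \<Gamma> y)" for y z
  define p where "p y x = exp (- bH x y) / Z y" for y x
  define r where "r z = exp (aT z y1 - aT z y0 - \<Gamma> y1 + \<Gamma> y0)" for z
  have aTc: "continuous_on UNIV (\<lambda>z. aT z y)" for y
    unfolding aT_def by (rule cont_blk) (use Tc in \<open>auto intro: comp_cont_vec[OF _ continuous_on_id]\<close>)
  have bHc: "continuous_on UNIV (\<lambda>x. bH x y)" for y
    unfolding bH_def by (rule cont_blk) (use Hc fc in \<open>auto intro: comp_cont_vec\<close>)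
  have hm: "h \<in> borel_measurable borel" using hc by (rule borel_measurable_continuous_onI)
  have Zp: "Z y > 0" if y: "y \<in> Y" for y
  proof (rule Zpos[OF hm, of "F y"])
    show "integrable lborel (F y)" using normaliser y unfolding F_def aT_def by blast
    show "integral\<^sup>L lborel (F y) > 0" using normaliser y unfolding F_def aT_def by blast
    show "\<forall>z. F y z \<ge> 0" using mu_nonneg unfolding F_def by simp
    show "\<forall>z. q y z = F y z * exp (- \<Gamma> y)" unfolding q_def F_def by (simp add: exp_diff exp_minus field_simps)
    show "exp (- \<Gamma> y) > 0" by simp
    show "\<forall>x. exp (- bH x y) > 0" by simp
    show "distr (density lborel (\<lambda>z. ennreal (q y z))) lborel h = density lborel (\<lambda>x. ennreal (exp (- bH x y) / Z y))"
      using model_x y unfolding q_def aT_def bH_def by blast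
  qed
  have key: "p y1 x = p y0 x * r (inv h x)" for x
  proof (rule dens_ratio[OF h_inv hc hic])
    have em: "(\<lambda>x. exp (aT x y0 - \<Gamma> y0)) \<in> borel_measurable borel"
      by (rule borel_measurable_continuous_onI) (intro continuous_intros aTc)
    have mm: "\<mu> \<in> borel_measurable borel" using mu_meas by (simp add: measurable_lborel1)
    show "q y0 \<in> borel_measurable borel" unfolding q_def
      using borel_measurable_times[OF mm em] by simp
    show "continuous_on UNIV r" unfolding r_def by (intro continuous_intros aTc)
    show "\<forall>z. q y1 z = q y0 z * r z" unfolding q_def r_def by (simp add: exp_add[symmetric])
    show "\<forall>z. r z \<ge> 0" unfolding r_def by simp
    show "\<forall>z. q y0 z \<ge> 0" unfolding q_def using mu_nonneg by simp
    show "continuous_on UNIV (p y0)" unfolding p_def using Zp[OF y0] by (intro continuous_intros bHc) simp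
    show "continuous_on UNIV (p y1)" unfolding p_def using Zp[OF y1] by (intro continuous_intros bHc) simp
    show "\<forall>x. p y0 x \<ge> 0" unfolding p_def using Zp[OF y0] by simp
    show "\<forall>x. p y1 x \<ge> 0" unfolding p_def using Zp[OF y1] by simp
    show "distr (density lborel (\<lambda>z. ennreal (q y0 z))) lborel h = density lborel (\<lambda>x. ennreal (p y0 x))"
      using model_x y0 unfolding q_def aT_def bH_def p_def by blast
    show "distr (density lborel (\<lambda>z. ennreal (q y1 z))) lborel h = density lborel (\<lambda>x. ennreal (p y1 x))"
      using model_x y1 unfolding q_def aT_def bH_def p_def by blast
  qed
  define \<kappa> where "\<kappa> = \<Gamma> y1 - \<Gamma> y0 - ln (Z y1) + ln (Z y0)"
  show ?thesis
  proof (intro exI allI)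
    fix z
    have ih: "inv h (h z) = z" using h_inv by (simp add: bij_is_inj)
    have e: "exp (- bH (h z) y1) / Z y1 = exp (- bH (h z) y0) / Z y0 * exp (aT z y1 - aT z y0 - \<Gamma> y1 + \<Gamma> y0)"
      using key[of "h z"] ih unfolding p_def r_def by simp
    have "ln (exp (- bH (h z) y1) / Z y1) = ln (exp (- bH (h z) y0) / Z y0 * exp (aT z y1 - aT z y0 - \<Gamma> y1 + \<Gamma> y0))"
      using e by simp
    then have "- bH (h z) y1 - ln (Z y1) = - bH (h z) y0 - ln (Z y0) + (aT z y1 - aT z y0 - \<Gamma> y1 + \<Gamma> y0)"
      using Zp[OF y0] Zp[OF y1] by (simp add: ln_div ln_mult)
    then have "aT z y1 - aT z y0 = - (bH (h z) y1 - bH (h z) y0) + \<kappa>" unfolding \<kappa>_def by simp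
    then show "blk_ip k (\<lambda>i. T i (z $ i)) (\<lambda>i j. lam i y1 j - lam i y0 j)
            = - blk_ip m (\<lambda>i. H i (f (h z) $ i)) (\<lambda>i j. g i y1 j - g i y0 j) + \<kappa>"
      unfolding aT_def bH_def by (simp add: blk_ip_diff)
  qed
qed



lemma sum_delta_P:
  assumes "finite P" "p' \<in> P"
  shows "(\<Sum>p\<in>P. X p * (if p = p' then 1 else 0)) = (X p' :: real)"
  using assms by (simp add: if_distrib cong: if_cong)

lemma T_as_B:
  fixes T :: "'d::finite \<Rightarrow> real \<Rightarrow> nat \<Rightarrow> real" and H :: "'d \<Rightarrow> real \<Rightarrow> nat \<Rightarrow> real"
    and w :: "real^'d \<Rightarrow> real^'d" and c :: "nat \<Rightarrow> 'd \<Rightarrow> nat \<Rightarrow> real" and dg :: "nat \<Rightarrow> 'd \<Rightarrow> nat \<Rightarrow> real"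
    and M :: "nat \<Rightarrow> 'd \<Rightarrow> nat \<Rightarrow> real"
  assumes E: "\<forall>l\<in>{1..K}. \<forall>z. blk_ip k (\<lambda>i. T i (z $ i)) (c l) = - blk_ip m (\<lambda>i. H i (w z $ i)) (dg l) + \<kappa> l"
    and Minv: "\<forall>i j i' j'. j < k i \<longrightarrow> j' < k i' \<longrightarrow>
          (\<Sum>l\<in>{1..K}. c l i j * M l i' j') = (if i = i' \<and> j = j' then 1 else 0)"
  shows "\<forall>p\<in>(SIGMA i:UNIV. {..<k i}). \<forall>z. T (fst p) (z $ fst p) (snd p)
      = (\<Sum>q\<in>(SIGMA i:UNIV. {..<m i}). (- (\<Sum>l\<in>{1..K}. M l (fst p) (snd p) * dg l (fst q) (snd q))) * H (fst q) (w z $ fst q) (snd q))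
        + (\<Sum>l\<in>{1..K}. M l (fst p) (snd p) * \<kappa> l)"
proof (intro ballI allI)
  fix p z assume pP: "p \<in> (SIGMA i:UNIV. {..<k i})"
  define P where "P = (SIGMA i:UNIV. {..<k i})"
  define Q where "Q = (SIGMA i:UNIV. {..<m i})"
  have fP: "finite P" unfolding P_def by (simp add: finite_SigmaI)
  have fQ: "finite Q" unfolding Q_def by (simp add: finite_SigmaI)
  have pP': "p \<in> P" using pP unfolding P_def .
  define Tf where "Tf p' = T (fst p') (z $ fst p') (snd p')" for p'
  define Hf where "Hf q = H (fst q) (w z $ fst q) (snd q)" for q
  have "Tf p = (\<Sum>p'\<in>P. Tf p' * (if p' = p then 1 else 0))" using sum_delta_P[OF fP pP'] by simp
  also have "\<dots> = (\<Sum>p'\<in>P. Tf p' * (\<Sum>l\<in>{1..K}. c l (fst p') (snd p') * M l (fst p) (snd p)))"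
    using Minv pP' unfolding P_def by (intro sum.cong refl) (auto simp: prod_eq_iff)
  also have "\<dots> = (\<Sum>l\<in>{1..K}. M l (fst p) (snd p) * (\<Sum>p'\<in>P. Tf p' * c l (fst p') (snd p')))"
    by (simp add: sum_distrib_left sum_distrib_right sum.swap[of _ P] mult.commute mult.left_commute)
  also have "\<dots> = (\<Sum>l\<in>{1..K}. M l (fst p) (snd p) * (- (\<Sum>q\<in>Q. Hf q * dg l (fst q) (snd q)) + \<kappa> l))"
    using E unfolding Tf_def Hf_def P_def Q_def by (intro sum.cong refl) (simp add: blk_ip_Sigma)
  also have "\<dots> = - (\<Sum>l\<in>{1..K}. M l (fst p) (snd p) * (\<Sum>q\<in>Q. Hf q * dg l (fst q) (snd q)))
        + (\<Sum>l\<in>{1..K}. M l (fst p) (snd p) * \<kappa> l)"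
    by (simp add: algebra_simps sum.distrib sum_subtractf)
  also have "(\<Sum>l\<in>{1..K}. M l (fst p) (snd p) * (\<Sum>q\<in>Q. Hf q * dg l (fst q) (snd q)))
      = (\<Sum>q\<in>Q. (\<Sum>l\<in>{1..K}. M l (fst p) (snd p) * dg l (fst q) (snd q)) * Hf q)"
    by (simp add: sum_distrib_left sum_distrib_right mult_ac) (rule sum.swap)
  also have "- (\<Sum>q\<in>Q. (\<Sum>l\<in>{1..K}. M l (fst p) (snd p) * dg l (fst q) (snd q)) * Hf q)
      = (\<Sum>q\<in>Q. (- (\<Sum>l\<in>{1..K}. M l (fst p) (snd p) * dg l (fst q) (snd q))) * Hf q)"
    by (simp add: sum_negf)
  finally show "T (fst p) (z $ fst p) (snd p)
      = (\<Sum>q\<in>(SIGMA i:UNIV. {..<m i}). (- (\<Sum>l\<in>{1..K}. M l (fst p) (snd p) * dg l (fst q) (snd q))) * H (fst q) (w z $ fst q) (snd q))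
        + (\<Sum>l\<in>{1..K}. M l (fst p) (snd p) * \<kappa> l)" unfolding Tf_def Hf_def Q_def .
qed

lemma B_ker:
  fixes T :: "'d::finite \<Rightarrow> real \<Rightarrow> nat \<Rightarrow> real" and H :: "'d \<Rightarrow> real \<Rightarrow> nat \<Rightarrow> real"
    and w :: "real^'d \<Rightarrow> real^'d" and B :: "'d \<times> nat \<Rightarrow> 'd \<times> nat \<Rightarrow> real"
  assumes se: "\<forall>i. strong_exp_cond (k i) (T i)"
    and TB: "\<forall>p\<in>(SIGMA i:UNIV. {..<k i}). \<forall>z. T (fst p) (z $ fst p) (snd p)
      = (\<Sum>q\<in>(SIGMA i:UNIV. {..<m i}). B p q * H (fst q) (w z $ fst q) (snd q)) + e p"
    and ker: "\<forall>q\<in>(SIGMA i:UNIV. {..<m i}). (\<Sum>p\<in>(SIGMA i:UNIV. {..<k i}). \<eta> p * B p q) = 0"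
  shows "\<forall>p\<in>(SIGMA i:UNIV. {..<k i}). \<eta> p = 0"
proof -
  define P where "P = (SIGMA i:UNIV. {..<k i})"
  define Q where "Q = (SIGMA i:UNIV. {..<m i})"
  have fP: "finite P" unfolding P_def by (simp add: finite_SigmaI)
  have "\<forall>z::real^'d. (\<Sum>c\<in>UNIV. \<Sum>l<k c. \<eta> (c,l) * T c (z $ c) l) = (\<Sum>p\<in>P. \<eta> p * e p)"
  proof
    fix z :: "real^'d"
    have "(\<Sum>c\<in>UNIV. \<Sum>l<k c. \<eta> (c,l) * T c (z $ c) l) = (\<Sum>p\<in>P. \<eta> p * T (fst p) (z $ fst p) (snd p))"
      unfolding P_def sumS by simp
    also have "\<dots> = (\<Sum>p\<in>P. \<eta> p * ((\<Sum>q\<in>Q. B p q * H (fst q) (w z $ fst q) (snd q)) + e p))"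
    proof (intro sum.cong refl)
      fix p assume "p \<in> P"
      then show "\<eta> p * T (fst p) (z $ fst p) (snd p) = \<eta> p * ((\<Sum>q\<in>Q. B p q * H (fst q) (w z $ fst q) (snd q)) + e p)"
        using TB unfolding P_def Q_def by auto
    qed
    also have "\<dots> = (\<Sum>q\<in>Q. (\<Sum>p\<in>P. \<eta> p * B p q) * H (fst q) (w z $ fst q) (snd q)) + (\<Sum>p\<in>P. \<eta> p * e p)"
      by (simp add: distrib_left sum.distrib sum_distrib_left sum_distrib_right sum.swap[of _ Q] mult.assoc)
    also have "\<dots> = (\<Sum>p\<in>P. \<eta> p * e p)"
      using ker unfolding P_def Q_def by (subst sum.neutral) (auto simp del: SigmaI)
    finally show "(\<Sum>c\<in>UNIV. \<Sum>l<k c. \<eta> (c,l) * T c (z $ c) l) = (\<Sum>p\<in>P. \<eta> p * e p)" .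
  qed
  then have "\<forall>c. \<forall>l<k c. \<eta> (c,l) = 0" by (rule kernel_sep[OF se])
  then show ?thesis by auto
qed

lemma card_PQ:
  assumes "bij \<sigma>" "\<forall>i. m i = k (\<sigma> i)"
  shows "card (SIGMA i:(UNIV::'d::finite set). {..<k i}) = card (SIGMA i:(UNIV::'d set). {..<(m i::nat)})"
proof -
  have "card (SIGMA i:(UNIV::'d set). {..<m i}) = (\<Sum>i\<in>UNIV. m i)" by (simp add: card_SigmaI)
  also have "\<dots> = (\<Sum>i\<in>UNIV. k (\<sigma> i))" using assms(2) by simp
  also have "\<dots> = (\<Sum>i\<in>UNIV. k i)" using sum.reindex_bij_betw[of \<sigma> UNIV UNIV k] assms(1) by (simp add: bij_betw_def)
  also have "\<dots> = card (SIGMA i:(UNIV::'d set). {..<k i})" by (simp add: card_SigmaI)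
  finally show ?thesis by simp
qed



lemma sum_Sigma_single:
  fixes c :: "'d::finite"
  assumes "\<forall>p\<in>(SIGMA i:UNIV. {..<(n i::nat)}). fst p \<noteq> c \<longrightarrow> F p = 0"
  shows "(\<Sum>p\<in>(SIGMA i:UNIV. {..<n i}). F p) = (\<Sum>l<n c. F (c,l))"
proof -
  have "(\<Sum>p\<in>(SIGMA i:UNIV. {..<n i}). F p) = (\<Sum>i\<in>UNIV. \<Sum>l<n i. F (i,l))" by (rule sumS)
  also have "\<dots> = (\<Sum>l<n c. F (c,l)) + (\<Sum>i\<in>UNIV-{c}. \<Sum>l<n i. F (i,l))" by (simp add: sum.remove)
  also have "(\<Sum>i\<in>UNIV-{c}. \<Sum>l<n i. F (i,l)) = 0" using assms by (intro sum.neutral) auto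
  finally show ?thesis by simp
qed

lemma deriv_T_line:
  fixes z :: "real^'d::finite"
  assumes Td: "\<forall>t. ((\<lambda>v. T c v l) has_real_derivative Td t) (at t)"
  shows "((\<lambda>t. T c ((z + t *\<^sub>R axis a 1) $ c) l) has_real_derivative (if c = a then Td (z $ a) else 0)) (at 0)"
proof (cases "c = a")
  case True
  have d1: "((\<lambda>t. z $ a + t) has_real_derivative 1) (at 0)" by (auto intro!: derivative_eq_intros)
  have "((\<lambda>t. T a (z $ a + t) l) has_real_derivative Td (z $ a + 0) * 1) (at 0)"
    using DERIV_chain2[OF Td[rule_format, of "z $ a + 0"] d1] True by simp
  then show ?thesis using True by (simp add: axis_def)
next
  case False
  then show ?thesis by (simp add: axis_def)
qed

lemma deriv_identity:
  fixes w :: "real^'d::finite \<Rightarrow> real^'d" and C :: "'d \<times> nat \<Rightarrow> 'd \<times> nat \<Rightarrow> real"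
  assumes HC: "\<forall>z. H i (w z $ i) j = (\<Sum>p\<in>(SIGMA c:UNIV. {..<k c}). C (i,j) p * T (fst p) (z $ fst p) (snd p)) + b"
    and Hd: "\<forall>u. ((\<lambda>v. H i v j) has_real_derivative Hd u) (at u)"
    and Td: "\<forall>a. \<forall>l<k a. \<forall>t. ((\<lambda>v. T a v l) has_real_derivative Td a l t) (at t)"
    and wd: "((\<lambda>t. w (z + t *\<^sub>R axis a 1) $ i) has_real_derivative Dw) (at 0)"
  shows "Hd (w z $ i) * Dw = (\<Sum>l<k a. C (i,j) (a,l) * Td a l (z $ a))"
proof -
  have d1: "((\<lambda>t. H i (w (z + t *\<^sub>R axis a 1) $ i) j) has_real_derivative Hd (w z $ i) * Dw) (at 0)"
    using DERIV_chain2[OF Hd[rule_format, of "w (z + 0 *\<^sub>R axis a 1) $ i"] wd] by simp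
  have eq: "H i (w (z + t *\<^sub>R axis a 1) $ i) j = (\<Sum>c\<in>UNIV. \<Sum>l<k c. C (i,j) (c,l) * T c ((z + t *\<^sub>R axis a 1) $ c) l) + b" for t
    using HC by (simp add: sumS)
  have d2: "((\<lambda>t. (\<Sum>c\<in>UNIV. \<Sum>l<k c. C (i,j) (c,l) * T c ((z + t *\<^sub>R axis a 1) $ c) l) + b) has_real_derivative
       (\<Sum>c\<in>UNIV. \<Sum>l<k c. C (i,j) (c,l) * (if c = a then Td a l (z $ a) else 0))) (at 0)"
  proof -
    have dT: "((\<lambda>t. T c ((z + t *\<^sub>R axis a 1) $ c) l) has_real_derivative (if c = a then Td a l (z $ a) else 0)) (at 0)"
      if "l < k c" for c l
      using deriv_T_line[of T c l "Td c l" z a] Td that by (cases "c = a") auto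
    show ?thesis
      apply (rule DERIV_add[where E=0, simplified])
      apply (rule DERIV_sum)
      apply (rule DERIV_sum)
      apply (rule DERIV_cmult)
      using dT apply simp
      by simp
  qed
  have d2': "((\<lambda>t. H i (w (z + t *\<^sub>R axis a 1) $ i) j) has_real_derivative
       (\<Sum>c\<in>UNIV. \<Sum>l<k c. C (i,j) (c,l) * (if c = a then Td a l (z $ a) else 0))) (at 0)"
    using d2 eq by simp
  have "Hd (w z $ i) * Dw = (\<Sum>c\<in>UNIV. \<Sum>l<k c. C (i,j) (c,l) * (if c = a then Td a l (z $ a) else 0))"
    using DERIV_unique[OF d1 d2'] .
  also have "\<dots> = (\<Sum>c\<in>UNIV. if c = a then (\<Sum>l<k a. C (i,j) (a,l) * Td a l (z $ a)) else 0)"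
    by (intro sum.cong) auto
  also have "\<dots> = (\<Sum>l<k a. C (i,j) (a,l) * Td a l (z $ a))" by simp
  finally show ?thesis .
qed



lemma caseA_block:
  fixes C :: "'d::finite \<times> nat \<Rightarrow> 'd \<times> nat \<Rightarrow> real" and T :: "'d \<Rightarrow> real \<Rightarrow> nat \<Rightarrow> real"
    and Psi :: "real^'d \<Rightarrow> nat \<Rightarrow> real" and D :: "real^'d \<Rightarrow> 'd \<Rightarrow> real"
  assumes mi: "m i \<ge> (2::nat)"
    and se: "\<forall>a. strong_exp_cond (k a) (T a)"
    and Td: "\<forall>a. \<forall>l<k a. \<forall>t. ((\<lambda>v. T a v l) has_real_derivative Td a l t) (at t)"
    and ident: "\<forall>z a. \<forall>j<m i. Psi z j * D z a = (\<Sum>l<k a. C (i,j) (a,l) * Td a l (z $ a))"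
    and Cker: "\<forall>\<eta>. (\<forall>p\<in>(SIGMA c:UNIV. {..<k c}). (\<Sum>q\<in>(SIGMA c:UNIV. {..<m c}). \<eta> q * C q p) = 0)
                   \<longrightarrow> (\<forall>q\<in>(SIGMA c:UNIV. {..<m c}). \<eta> q = 0)"
  shows "\<exists>c. \<forall>a. a \<noteq> c \<longrightarrow> (\<forall>j<m i. \<forall>l<k a. C (i,j) (a,l) = 0)"
proof -
  define \<Lambda> where "\<Lambda> a t j = (\<Sum>l<k a. C (i,j) (a,l) * Td a l t)" for a t j
  define J where "J a \<longleftrightarrow> (\<exists>j<m i. \<exists>l<k a. C (i,j) (a,l) \<noteq> 0)" for a
  have nz: "\<exists>t j. j < m i \<and> \<Lambda> a t j \<noteq> 0" if Ja: "J a" for a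
  proof (rule ccontr)
    assume no: "\<not> (\<exists>t j. j < m i \<and> \<Lambda> a t j \<noteq> 0)"
    have "\<forall>l<k a. C (i,j) (a,l) = 0" if j: "j < m i" for j
    proof (rule deriv_zero_coeffs[of "k a" "T a" "Td a"])
      show "strong_exp_cond (k a) (T a)" using se by blast
      show "\<forall>l<k a. \<forall>t. ((\<lambda>v. T a v l) has_real_derivative Td a l t) (at t)" using Td by blast
      show "\<forall>t. (\<Sum>l<k a. Td a l t * C (i,j) (a,l)) = 0" using no j unfolding \<Lambda>_def by (auto simp: mult.commute)
    qed
    then show False using Ja unfolding J_def by blast
  qed
  show ?thesis
  proof (rule ccontr)
    assume "\<not> ?thesis"
    then have all: "\<forall>c. \<exists>a. a \<noteq> c \<and> J a" unfolding J_def by blast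
    obtain a where Ja: "J a" using all by blast
    obtain b where ba: "b \<noteq> a" and Jb: "J b" using all by blast
    obtain ta j0 where j0: "j0 < m i" "\<Lambda> a ta j0 \<noteq> 0" using nz[OF Ja] by blast
    obtain tb jb where jb: "jb < m i" "\<Lambda> b tb jb \<noteq> 0" using nz[OF Jb] by blast
    define \<mu> where "\<mu> j = \<Lambda> a ta j" for j
    have par1: "\<exists>s. \<forall>j<m i. \<Lambda> c t j = s * \<mu> j" if ca: "c \<noteq> a" for c t
    proof -
      define z :: "real^'d" where "z = (\<chi> x. if x = a then ta else if x = c then t else 0)"
      have za: "z $ a = ta" and zc: "z $ c = t" unfolding z_def using ca by auto
      have Da: "D z a \<noteq> 0" using ident[rule_format, of j0 z a] j0 za unfolding \<Lambda>_def by auto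
      show ?thesis
      proof (intro exI allI impI)
        fix j assume j: "j < m i"
        have e1: "Psi z j * D z a = \<mu> j" using ident[rule_format, of j z a] j za unfolding \<Lambda>_def \<mu>_def by simp
        have e2: "Psi z j * D z c = \<Lambda> c t j" using ident[rule_format, of j z c] j zc unfolding \<Lambda>_def by simp
        show "\<Lambda> c t j = D z c / D z a * \<mu> j"
          by (simp only: e1[symmetric] e2[symmetric]) (use Da in \<open>simp add: field_simps\<close>)
      qed
    qed
    obtain s0 where s0: "\<forall>j<m i. \<Lambda> b tb j = s0 * \<mu> j" using par1[OF ba] by blast
    have par2: "\<exists>s. \<forall>j<m i. \<Lambda> a t j = s * \<mu> j" for t
    proof -
      define z :: "real^'d" where "z = (\<chi> x. if x = b then tb else if x = a then t else 0)"
      have zb: "z $ b = tb" and za: "z $ a = t" unfolding z_def using ba by auto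
      have Db: "D z b \<noteq> 0" using ident[rule_format, of jb z b] jb zb unfolding \<Lambda>_def by auto
      show ?thesis
      proof (intro exI allI impI)
        fix j assume j: "j < m i"
        have e1: "Psi z j * D z b = s0 * \<mu> j" using ident[rule_format, of j z b] j zb s0 unfolding \<Lambda>_def by simp
        have e2: "Psi z j * D z a = \<Lambda> a t j" using ident[rule_format, of j z a] j za unfolding \<Lambda>_def by simp
        show "\<Lambda> a t j = s0 * D z a / D z b * \<mu> j"
          by (simp only: e2[symmetric]) (use Db e1 in \<open>simp add: field_simps\<close>)
      qed
    qed
    have par: "\<exists>s. \<forall>j<m i. \<Lambda> c t j = s * \<mu> j" for c t using par1 par2 by (cases "c = a") auto
    define j1 where "j1 = (if j0 = 0 then 1 else (0::nat))"
    have j1: "j1 < m i" "j1 \<noteq> j0" using mi j0 by (auto simp: j1_def)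
    have \<mu>0: "\<mu> j0 \<noteq> 0" using j0 \<mu>_def by simp
    define \<eta> where "\<eta> j = (if j = j0 then \<mu> j1 else if j = j1 then - \<mu> j0 else 0)" for j
    have \<eta>\<mu>: "(\<Sum>j<m i. \<eta> j * X j) = \<mu> j1 * X j0 - \<mu> j0 * X j1" for X
    proof -
      have "(\<Sum>j<m i. \<eta> j * X j) = (\<Sum>j<m i. (if j = j0 then \<mu> j1 * X j0 else 0) + (if j = j1 then - \<mu> j0 * X j1 else 0))"
        using j1 by (intro sum.cong) (auto simp: \<eta>_def)
      also have "\<dots> = \<mu> j1 * X j0 - \<mu> j0 * X j1" using j0 j1 by (simp add: sum.distrib)
      finally show ?thesis .
    qed
    have kill: "\<forall>l<k c. (\<Sum>j<m i. \<eta> j * C (i,j) (c,l)) = 0" for c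
    proof (rule deriv_zero_coeffs[of "k c" "T c" "Td c"])
      show "strong_exp_cond (k c) (T c)" using se by blast
      show "\<forall>l<k c. \<forall>t. ((\<lambda>v. T c v l) has_real_derivative Td c l t) (at t)" using Td by blast
      show "\<forall>t. (\<Sum>l<k c. Td c l t * (\<Sum>j<m i. \<eta> j * C (i,j) (c,l))) = 0"
      proof
        fix t
        obtain s where s: "\<forall>j<m i. \<Lambda> c t j = s * \<mu> j" using par by blast
        have "(\<Sum>l<k c. Td c l t * (\<Sum>j<m i. \<eta> j * C (i,j) (c,l))) = (\<Sum>j<m i. \<eta> j * \<Lambda> c t j)"
          unfolding \<Lambda>_def by (simp add: sum_distrib_left sum_distrib_right mult_ac) (rule sum.swap)
        also have "\<dots> = (\<Sum>j<m i. \<eta> j * (s * \<mu> j))" using s by (intro sum.cong) auto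
        also have "\<dots> = s * (\<Sum>j<m i. \<eta> j * \<mu> j)" by (simp add: sum_distrib_left mult_ac)
        also have "(\<Sum>j<m i. \<eta> j * \<mu> j) = 0" using \<eta>\<mu>[of \<mu>] by simp
        finally show "(\<Sum>l<k c. Td c l t * (\<Sum>j<m i. \<eta> j * C (i,j) (c,l))) = 0" by simp
      qed
    qed
    define \<eta>' where "\<eta>' q = (if fst q = i then \<eta> (snd q) else 0)" for q :: "'d \<times> nat"
    have "\<forall>p\<in>(SIGMA c:UNIV. {..<k c}). (\<Sum>q\<in>(SIGMA c:UNIV. {..<m c}). \<eta>' q * C q p) = 0"
    proof
      fix p assume p: "p \<in> (SIGMA c:UNIV. {..<k c})"
      have "(\<Sum>q\<in>(SIGMA c:UNIV. {..<m c}). \<eta>' q * C q p) = (\<Sum>j<m i. \<eta>' (i,j) * C (i,j) p)"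
        by (rule sum_Sigma_single) (auto simp: \<eta>'_def)
      also have "\<dots> = (\<Sum>j<m i. \<eta> j * C (i,j) (fst p, snd p))" by (simp add: \<eta>'_def)
      also have "\<dots> = 0" using kill[of "fst p"] p by auto
      finally show "(\<Sum>q\<in>(SIGMA c:UNIV. {..<m c}). \<eta>' q * C q p) = 0" .
    qed
    then have "\<eta>' (i, j1) = 0" using Cker j1 by blast
    then show False using j1 \<mu>0 by (simp add: \<eta>'_def \<eta>_def)
  qed
qed



lemma axis_inner_eq: "axis i (1::real) \<bullet> (x :: real^'d::finite) = x $ i"
  by (simp add: inner_axis')

lemma caseB_block:
  fixes C :: "'d::finite \<times> nat \<Rightarrow> 'd \<times> nat \<Rightarrow> real" and T :: "'d \<Rightarrow> real \<Rightarrow> nat \<Rightarrow> real"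
    and w winv :: "real^'d \<Rightarrow> real^'d"
  assumes k1: "\<forall>a. k a = (1::nat)"
    and se: "\<forall>a. strong_exp_cond (k a) (T a)"
    and Td: "\<forall>a. \<forall>t. ((\<lambda>v. T a v 0) has_real_derivative Td a t) (at t)"
    and ident0: "\<forall>z a. w z $ i = u \<longrightarrow> C (i,0) (a,0) * Td a (z $ a) = 0"
    and winv: "\<forall>x. w (winv x) = x" and winvc: "continuous_on UNIV winv" and winj: "inj winv"
  shows "\<exists>c. \<forall>a. a \<noteq> c \<longrightarrow> C (i,0) (a,0) = 0"
proof (rule ccontr)
  assume "\<not> ?thesis"
  then have all: "\<forall>c. \<exists>a. a \<noteq> c \<and> C (i,0) (a,0) \<noteq> 0" by blast
  obtain a where Ca: "C (i,0) (a,0) \<noteq> 0" using all by blast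
  obtain b where ba: "b \<noteq> a" and Cb: "C (i,0) (b,0) \<noteq> 0" using all by blast
  define Hy where "Hy = {x::real^'d. axis i 1 \<bullet> x = u}"
  define x0 where "x0 = u *\<^sub>R (axis i 1 :: real^'d)"
  have x0H: "x0 \<in> Hy" unfolding Hy_def x0_def by (simp add: axis_inner_eq)
  have proj: "\<forall>x\<in>Hy. winv x $ c = winv x0 $ c" if Cc: "C (i,0) (c,0) \<noteq> 0" for c
  proof
    fix x assume xH: "x \<in> Hy"
    define X where "X = (\<lambda>x. winv x $ c) ` Hy"
    have cX: "connected X" unfolding X_def
    proof (rule connected_continuous_image)
      show "continuous_on Hy (\<lambda>x. winv x $ c)"
        using winvc by (intro continuous_intros) (auto intro: continuous_on_subset)
      show "connected Hy" unfolding Hy_def by (intro convex_connected convex_hyperplane)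
    qed
    have Tz: "Td c t = 0" if "t \<in> X" for t
    proof -
      obtain y where y: "y \<in> Hy" "t = winv y $ c" using \<open>t \<in> X\<close> unfolding X_def by auto
      have "w (winv y) $ i = u" using y winv unfolding Hy_def by (simp add: axis_inner_eq)
      then have "C (i,0) (c,0) * Td c (winv y $ c) = 0" using ident0 by blast
      then show ?thesis using Cc y by simp
    qed
    show "winv x $ c = winv x0 $ c"
    proof (rule ccontr)
      assume ne: "winv x $ c \<noteq> winv x0 $ c"
      define lo where "lo = min (winv x $ c) (winv x0 $ c)"
      define hi where "hi = max (winv x $ c) (winv x0 $ c)"
      have lohi: "lo < hi" using ne unfolding lo_def hi_def by auto
      have loX: "lo \<in> X" and hiX: "hi \<in> X" unfolding lo_def hi_def X_def using xH x0H
        by (auto simp: min_def max_def)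
      have sub: "{lo..hi} \<subseteq> X" using connected_contains_Icc[OF cX loX hiX] .
      have contT: "continuous_on {lo..hi} (\<lambda>v. T c v 0)"
        using Td by (intro continuous_at_imp_continuous_on ballI DERIV_isCont) blast
      have const: "\<forall>t\<in>{lo..hi}. (\<Sum>l<k c. T c t l * (\<lambda>_. 1) l) = T c lo 0"
      proof
        fix t assume t: "t \<in> {lo..hi}"
        have "T c t 0 = T c lo 0"
        proof (rule DERIV_isconst2[OF lohi contT])
          fix y assume "lo < y" "y < hi"
          then have "y \<in> X" using sub by auto
          then have "Td c y = 0" using Tz by blast
          then show "((\<lambda>v. T c v 0) has_real_derivative 0) (at y)" using Td by metis
        qed (use t in auto)
        then show "(\<Sum>l<k c. T c t l * (\<lambda>_. 1) l) = T c lo 0" using k1 by simp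
      qed
      have "\<forall>l<k c. (\<lambda>_. 1::real) l = 0" using strong_exp_Icc[OF _ lohi const] se by blast
      then show False using k1 by auto
    qed
  qed
  define V where "V = {x::real^'d. axis i 1 \<bullet> x = 0}"
  define V' where "V' = {x::real^'d. axis a 1 \<bullet> x = 0}"
  define W where "W = V' \<inter> {x::real^'d. axis b 1 \<bullet> x = 0}"
  define \<phi> where "\<phi> x = winv (x + x0) - winv x0" for x
  have sV: "subspace V" unfolding V_def by (rule subspace_hyperplane)
  have sV': "subspace V'" unfolding V'_def by (rule subspace_hyperplane)
  have sW: "subspace W" unfolding W_def by (rule subspace_inter[OF sV' subspace_hyperplane])
  have "dim V \<le> dim W"
  proof (rule continuous_injective_image_subspace_dim_le[OF sV sW])
    show "continuous_on V \<phi>" unfolding \<phi>_def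
      using winvc by (intro continuous_intros continuous_on_compose2[OF winvc]) auto
    show "\<phi> \<in> V \<rightarrow> W"
    proof
      fix x assume "x \<in> V"
      then have xH: "x + x0 \<in> Hy" unfolding V_def Hy_def x0_def by (simp add: axis_inner_eq)
      show "\<phi> x \<in> W" unfolding W_def V'_def \<phi>_def
        using proj[OF Ca, rule_format, OF xH] proj[OF Cb, rule_format, OF xH] by (simp add: axis_inner_eq)
    qed
    show "inj_on \<phi> V" unfolding \<phi>_def inj_on_def
    proof (intro ballI impI)
      fix x y assume "winv (x + x0) - winv x0 = winv (y + x0) - winv x0"
      then have "winv (x + x0) = winv (y + x0)" by simp
      then have "x + x0 = y + x0" by (rule injD[OF winj])
      then show "x = y" by simp
    qed
  qed
  moreover have "dim W < dim V'"
  proof (rule dim_psubset)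
    have "W \<subset> V'"
    proof
      show "W \<subseteq> V'" unfolding W_def by auto
      have ab: "axis b (1::real) $ a = 0" using ba by (simp add: axis_def)
      have "axis b 1 \<in> V'" "axis b 1 \<notin> W" unfolding V'_def W_def using ab by (auto simp: axis_inner_eq)
      then show "W \<noteq> V'" by blast
    qed
    moreover have "span W = W" by (rule real_vector.span_eq_iff[THEN iffD2, OF sW])
    moreover have "span V' = V'" by (rule real_vector.span_eq_iff[THEN iffD2, OF sV'])
    ultimately show "span W \<subset> span V'" by metis
  qed
  moreover have "dim V = dim V'" unfolding V_def V'_def by (simp add: dim_hyperplane axis_eq_0_iff)
  ultimately show False by simp
qed




lemma assemble:
  fixes C B :: "'d::finite \<times> nat \<Rightarrow> 'd \<times> nat \<Rightarrow> real" and k m :: "'d \<Rightarrow> nat"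
    and h f :: "real^'d \<Rightarrow> real^'d" and T H :: "'d \<Rightarrow> real \<Rightarrow> nat \<Rightarrow> real"
  assumes BC: "\<forall>p\<in>(SIGMA c:UNIV. {..<k c}). \<forall>p'\<in>(SIGMA c:UNIV. {..<k c}).
                  (\<Sum>q\<in>(SIGMA c:UNIV. {..<m c}). B p q * C q p') = (if p = p' then 1 else 0)"
    and CB: "\<forall>q\<in>(SIGMA c:UNIV. {..<m c}). \<forall>q'\<in>(SIGMA c:UNIV. {..<m c}).
                  (\<Sum>p\<in>(SIGMA c:UNIV. {..<k c}). C q p * B p q') = (if q = q' then 1 else 0)"
    and blocks: "\<forall>i. \<exists>c. \<forall>a. a \<noteq> c \<longrightarrow> (\<forall>j<m i. \<forall>l<k a. C (i,j) (a,l) = 0)"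
    and kpos: "\<forall>c. k c \<ge> 1"
    and HC: "\<forall>q\<in>(SIGMA c:UNIV. {..<m c}). \<forall>z. H (fst q) (f (h z) $ fst q) (snd q)
               = (\<Sum>p\<in>(SIGMA c:UNIV. {..<k c}). C q p * T (fst p) (z $ fst p) (snd p)) + b q"
    and hinv: "\<forall>x. h (inv h x) = x"
  shows "\<exists>\<gamma>. bij \<gamma> \<and> (\<forall>i. m i = k (\<gamma> i)) \<and>
           (\<exists>(A :: 'd \<Rightarrow> nat \<Rightarrow> nat \<Rightarrow> real) (b :: 'd \<Rightarrow> nat \<Rightarrow> real).
              \<forall>i. sq_invertible (m i) (A i) \<and>
                  (\<forall>x. \<forall>j < m i. H i (f x $ i) j
                        = (\<Sum>l < k (\<gamma> i). A i j l * T (\<gamma> i) (inv h x $ \<gamma> i) l) + b i j))"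
proof -
  define \<gamma> where "\<gamma> i = (SOME c. \<forall>a. a \<noteq> c \<longrightarrow> (\<forall>j<m i. \<forall>l<k a. C (i,j) (a,l) = 0))" for i
  have \<gamma>p: "\<forall>a. a \<noteq> \<gamma> i \<longrightarrow> (\<forall>j<m i. \<forall>l<k a. C (i,j) (a,l) = 0)" for i
    using someI_ex[OF blocks[rule_format, of i]] unfolding \<gamma>_def .
  have surj: "surj \<gamma>"
  proof (rule ccontr)
    assume "\<not> surj \<gamma>"
    then obtain c where nc: "c \<notin> range \<gamma>" by auto
    have c0: "(c,0) \<in> (SIGMA c:UNIV. {..<k c})" using kpos by (simp add: Suc_le_eq)
    have "(\<Sum>q\<in>(SIGMA c:UNIV. {..<m c}). B (c,0) q * C q (c,0)) = 1" using BC c0 by simp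
    moreover have "(\<Sum>q\<in>(SIGMA c:UNIV. {..<m c}). B (c,0) q * C q (c,0)) = 0"
    proof (rule sum.neutral, rule ballI)
      fix q assume q: "q \<in> (SIGMA c:UNIV. {..<m c})"
      have "c \<noteq> \<gamma> (fst q)" using nc by auto
      then have "C (fst q, snd q) (c,0) = 0" using \<gamma>p[of "fst q"] q kpos by (auto simp: Suc_le_eq)
      then show "B (c,0) q * C q (c,0) = 0" by simp
    qed
    ultimately show False by simp
  qed
  have inj: "inj \<gamma>" by (rule finite_UNIV_surj_inj[OF _ surj]) simp
  have bij: "bij \<gamma>" using inj surj by (simp add: bij_def)
  define A where "A i j l = C (i,j) (\<gamma> i, l)" for i j l
  define Bb where "Bb i l j = B (\<gamma> i, l) (i, j)" for i l j
  define b' where "b' i j = b (i,j)" for i j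
  have AB: "(\<Sum>l<k (\<gamma> i). A i j l * Bb i l j') = (if j = j' then 1 else 0)" if "j < m i" "j' < m i" for i j j'
  proof -
    have "(\<Sum>p\<in>(SIGMA c:UNIV. {..<k c}). C (i,j) p * B p (i,j')) = (\<Sum>l<k (\<gamma> i). C (i,j) (\<gamma> i, l) * B (\<gamma> i, l) (i,j'))"
      by (rule sum_Sigma_single) (use \<gamma>p that in auto)
    moreover have "(\<Sum>p\<in>(SIGMA c:UNIV. {..<k c}). C (i,j) p * B p (i,j')) = (if j = j' then 1 else 0)"
      using CB that by auto
    ultimately show ?thesis unfolding A_def Bb_def by simp
  qed
  have BA: "(\<Sum>j<m i. Bb i l j * A i j l') = (if l = l' then 1 else 0)" if "l < k (\<gamma> i)" "l' < k (\<gamma> i)" for i l l'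
  proof -
    have "(\<Sum>q\<in>(SIGMA c:UNIV. {..<m c}). B (\<gamma> i, l) q * C q (\<gamma> i, l')) = (\<Sum>j<m i. B (\<gamma> i, l) (i,j) * C (i,j) (\<gamma> i, l'))"
    proof (rule sum_Sigma_single, intro ballI impI)
      fix q assume q: "q \<in> (SIGMA c:UNIV. {..<m c})" and ne: "fst q \<noteq> i"
      then have "\<gamma> (fst q) \<noteq> \<gamma> i" using inj by (auto simp: inj_def)
      then have "C (fst q, snd q) (\<gamma> i, l') = 0" using \<gamma>p[of "fst q"] q that by auto
      then show "B (\<gamma> i, l) q * C q (\<gamma> i, l') = 0" by simp
    qed
    moreover have "(\<Sum>q\<in>(SIGMA c:UNIV. {..<m c}). B (\<gamma> i, l) q * C q (\<gamma> i, l')) = (if l = l' then 1 else 0)"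
      using BC that by auto
    ultimately show ?thesis unfolding A_def Bb_def by simp
  qed
  have dims: "m i = k (\<gamma> i)" for i
  proof -
    have "real (m i) = (\<Sum>j<m i. \<Sum>l<k (\<gamma> i). A i j l * Bb i l j)" using AB by simp
    also have "\<dots> = (\<Sum>l<k (\<gamma> i). \<Sum>j<m i. Bb i l j * A i j l)"
      by (subst sum.swap) (simp add: mult.commute)
    also have "\<dots> = real (k (\<gamma> i))" using BA by simp
    finally show ?thesis by simp
  qed
  show ?thesis
  proof (intro exI conjI allI impI)
    show "bij \<gamma>" by (rule bij)
    show "m i = k (\<gamma> i)" for i by (rule dims)
    fix i
    show "sq_invertible (m i) (A i)" unfolding sq_invertible_def
    proof (intro exI[of _ "Bb i"] allI impI conjI)
      fix j l assume jl: "j < m i" "l < m i"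
      show "(\<Sum>r<m i. A i j r * Bb i r l) = (if j = l then 1 else 0)" using AB[of j i l] jl dims[of i] by simp
      show "(\<Sum>r<m i. Bb i j r * A i r l) = (if j = l then 1 else 0)" using BA[of j i l] jl dims[of i] by simp
    qed
    fix x j assume j: "j < m i"
    have "H i (f x $ i) j = H (fst (i,j)) (f (h (inv h x)) $ fst (i,j)) (snd (i,j))" using hinv by simp
    also have "\<dots> = (\<Sum>p\<in>(SIGMA c:UNIV. {..<k c}). C (i,j) p * T (fst p) (inv h x $ fst p) (snd p)) + b (i,j)"
      using HC j by auto
    also have "(\<Sum>p\<in>(SIGMA c:UNIV. {..<k c}). C (i,j) p * T (fst p) (inv h x $ fst p) (snd p))
        = (\<Sum>l<k (\<gamma> i). A i j l * T (\<gamma> i) (inv h x $ \<gamma> i) l)"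
    proof -
      have "\<forall>p\<in>(SIGMA c:UNIV. {..<k c}). fst p \<noteq> \<gamma> i \<longrightarrow> C (i,j) p * T (fst p) (inv h x $ fst p) (snd p) = 0"
        using \<gamma>p j by auto
      then show ?thesis unfolding A_def
        using sum_Sigma_single[of k "\<gamma> i" "\<lambda>p. C (i,j) p * T (fst p) (inv h x $ fst p) (snd p)"] by simp
    qed
    finally show "H i (f x $ i) j = (\<Sum>l<k (\<gamma> i). A i j l * T (\<gamma> i) (inv h x $ \<gamma> i) l) + b' i j"
      unfolding b'_def .
  qed
qed




lemma line_diff:
  fixes F :: "real^'d::finite \<Rightarrow> real^'d"
  assumes "\<forall>x. F differentiable (at x)"
  shows "(\<lambda>t::real. F (z + t *\<^sub>R v) $ i) differentiable (at 0)"
proof -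
  have l: "(\<lambda>t::real. z + t *\<^sub>R v) differentiable (at 0)"
    by (intro differentiable_add differentiable_const differentiable_scaleR differentiable_ident)
  have "(\<lambda>t. F (z + t *\<^sub>R v)) differentiable (at 0)"
    by (rule differentiable_compose[OF _ l]) (use assms in blast)
  then show ?thesis
    by (rule differentiable_compose[OF bounded_linear_imp_differentiable[OF bounded_linear_vec_nth]])
qed

lemma diff_cont: "\<forall>x. F differentiable (at x) \<Longrightarrow> continuous_on UNIV F"
  by (simp add: differentiable_imp_continuous_within continuous_at_imp_continuous_on)

lemma C1_diff: "C1_map F \<Longrightarrow> \<forall>x. F differentiable (at x)"
  unfolding C1_map_def differentiable_def by blast

theorem mainTheorem9:
  fixes h f :: "real^'d::finite \<Rightarrow> real^'d"
    and k m :: "'d \<Rightarrow> nat"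
    and T :: "'d \<Rightarrow> real \<Rightarrow> nat \<Rightarrow> real"
    and lam :: "'d \<Rightarrow> 'y::euclidean_space \<Rightarrow> nat \<Rightarrow> real"
    and \<mu> :: "real^'d \<Rightarrow> real"
    and \<Gamma> :: "'y \<Rightarrow> real"
    and Y :: "'y set"
    and ys :: "nat \<Rightarrow> 'y"
    and H :: "'d \<Rightarrow> real \<Rightarrow> nat \<Rightarrow> real"
    and g :: "'d \<Rightarrow> 'y \<Rightarrow> nat \<Rightarrow> real"
    and Z :: "'y \<Rightarrow> real"
  assumes mu_meas: "\<mu> \<in> borel_measurable lborel"
    and mu_nonneg: "\<forall>z. \<mu> z \<ge> 0"
    and normaliser: "\<forall>y\<in>Y.
        integrable lborel (\<lambda>z. \<mu> z * exp (blk_ip k (\<lambda>i. T i (z $ i)) (\<lambda>i. lam i y))) \<and>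
        (LINT z|lborel. \<mu> z * exp (blk_ip k (\<lambda>i. T i (z $ i)) (\<lambda>i. lam i y))) > 0 \<and>
        \<Gamma> y = ln (LINT z|lborel. \<mu> z * exp (blk_ip k (\<lambda>i. T i (z $ i)) (\<lambda>i. lam i y)))"
    and h_inv: "bij h"
    and T_diff: "\<forall>i. vec_differentiable (k i) (T i)"
    and T_strong: "\<forall>i. strong_exp_cond (k i) (T i)"
    and ys_in: "\<forall>l \<le> (\<Sum>i\<in>UNIV. k i). ys l \<in> Y"
    and L_inv: "blk_matrix_invertible k (\<lambda>l i j. lam i (ys l) j - lam i (ys 0) j)"
    and H_diff: "\<forall>l. vec_differentiable (m l) (H l)"
    and m_perm: "\<exists>\<sigma>. bij \<sigma> \<and> (\<forall>i. m i = k (\<sigma> i))"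
    and model_x: "\<forall>y\<in>Y.
        distr (density lborel (\<lambda>z. ennreal (\<mu> z * exp (blk_ip k (\<lambda>i. T i (z $ i)) (\<lambda>i. lam i y) - \<Gamma> y))))
              lborel h
        = density lborel (\<lambda>x. ennreal (exp (- blk_ip m (\<lambda>i. H i (f x $ i)) (\<lambda>i. g i y)) / Z y))"
    and cases:
      "((\<forall>l. vec_twice_differentiable (k l) (T l) \<and> k l \<ge> 2) \<and> D2_diffeo h \<and> D2_diffeo f)
       \<or> ((\<forall>l. k l = 1 \<and> \<not> mono (\<lambda>u. T l u 0) \<and> \<not> antimono (\<lambda>u. T l u 0)) \<and>
          C1_diffeo h \<and> C1_diffeo f \<and> (\<forall>l. has_unique_extremum (\<lambda>v. H l v 0)))"
  shows "\<exists>\<gamma>. bij \<gamma> \<and> (\<forall>i. m i = k (\<gamma> i)) \<and>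
           (\<exists>(A :: 'd \<Rightarrow> nat \<Rightarrow> nat \<Rightarrow> real) (b :: 'd \<Rightarrow> nat \<Rightarrow> real).
              \<forall>i. sq_invertible (m i) (A i) \<and>
                  (\<forall>x. \<forall>j < m i. H i (f x $ i) j
                        = (\<Sum>l < k (\<gamma> i). A i j l * T (\<gamma> i) (inv h x $ \<gamma> i) l) + b i j))"
proof -
  define P where "P = (SIGMA c:(UNIV::'d set). {..<k c})"
  define Q where "Q = (SIGMA c:(UNIV::'d set). {..<m c})"
  define K where "K = (\<Sum>i\<in>UNIV. k i)"
  define w where "w z = f (h z)" for z
  obtain \<sigma> where \<sigma>: "bij \<sigma>" "\<forall>i. m i = k (\<sigma> i)" using m_perm by blast
  have hd: "\<forall>x. h differentiable (at x)" and fd: "\<forall>x. f differentiable (at x)"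
    and hid: "\<forall>x. inv h differentiable (at x)"
    using cases unfolding D2_diffeo_def C1_diffeo_def by (auto dest: C1_diff)
  have kk: "k c \<ge> 2 \<or> k c = 1" for c using cases by auto
  have kpos: "\<forall>c. k c \<ge> 1" using kk by (metis le_numeral_extra(4) one_le_numeral order_trans)
  have hc: "continuous_on UNIV h" using hd by (rule diff_cont)
  have fc: "continuous_on UNIV f" using fd by (rule diff_cont)
  have hic: "continuous_on UNIV (inv h)" using hid by (rule diff_cont)
  have Tdiff: "\<forall>a. \<forall>l<k a. \<forall>t. (\<lambda>v. T a v l) differentiable (at t)" using T_diff unfolding vec_differentiable_def by blast
  have Hdiff: "\<forall>a. \<forall>l<m a. \<forall>t. (\<lambda>v. H a v l) differentiable (at t)" using H_diff unfolding vec_differentiable_def by blast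
  define Td where "Td a l t = deriv (\<lambda>v. T a v l) t" for a l t
  define Hd where "Hd a l t = deriv (\<lambda>v. H a v l) t" for a l t
  have Td: "\<forall>a. \<forall>l<k a. \<forall>t. ((\<lambda>v. T a v l) has_real_derivative Td a l t) (at t)"
    using Tdiff unfolding Td_def by (simp add: DERIV_deriv_iff_real_differentiable)
  have Hdr: "\<forall>a. \<forall>l<m a. \<forall>t. ((\<lambda>v. H a v l) has_real_derivative Hd a l t) (at t)"
    using Hdiff unfolding Hd_def by (simp add: DERIV_deriv_iff_real_differentiable)
  have Tc: "\<forall>i. \<forall>j<k i. continuous_on UNIV (\<lambda>v. T i v j)"
    using Tdiff by (auto intro!: diff_cont)
  have Hc: "\<forall>i. \<forall>j<m i. continuous_on UNIV (\<lambda>v. H i v j)"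
    using Hdiff by (auto intro!: diff_cont)
  have E0: "\<forall>l\<in>{1..K}. \<exists>\<kappa>. \<forall>z. blk_ip k (\<lambda>i. T i (z $ i)) (\<lambda>i j. lam i (ys l) j - lam i (ys 0) j)
            = - blk_ip m (\<lambda>i. H i (w z $ i)) (\<lambda>i j. g i (ys l) j - g i (ys 0) j) + \<kappa>"
  proof
    fix l assume l: "l \<in> {1..K}"
    show "\<exists>\<kappa>. \<forall>z. blk_ip k (\<lambda>i. T i (z $ i)) (\<lambda>i j. lam i (ys l) j - lam i (ys 0) j)
            = - blk_ip m (\<lambda>i. H i (w z $ i)) (\<lambda>i j. g i (ys l) j - g i (ys 0) j) + \<kappa>"
      unfolding w_def
      by (rule main_identity[OF mu_meas mu_nonneg normaliser h_inv model_x hc hic fc Tc Hc])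
         (use ys_in l in \<open>auto simp: K_def\<close>)
  qed
  then have "\<exists>\<kappa>. \<forall>l\<in>{1..K}. \<forall>z. blk_ip k (\<lambda>i. T i (z $ i)) (\<lambda>i j. lam i (ys l) j - lam i (ys 0) j)
            = - blk_ip m (\<lambda>i. H i (w z $ i)) (\<lambda>i j. g i (ys l) j - g i (ys 0) j) + \<kappa> l"
    by (rule bchoice)
  then obtain \<kappa> where E: "\<forall>l\<in>{1..K}. \<forall>z. blk_ip k (\<lambda>i. T i (z $ i)) (\<lambda>i j. lam i (ys l) j - lam i (ys 0) j)
            = - blk_ip m (\<lambda>i. H i (w z $ i)) (\<lambda>i j. g i (ys l) j - g i (ys 0) j) + \<kappa> l"
    by blast
  obtain M where Minv: "\<forall>i j i' j'. j < k i \<longrightarrow> j' < k i' \<longrightarrow>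
          (\<Sum>l\<in>{1..K}. (lam i (ys l) j - lam i (ys 0) j) * M l i' j') = (if i = i' \<and> j = j' then 1 else 0)"
    using L_inv unfolding blk_matrix_invertible_def Let_def K_def by blast
  define B where "B p q = - (\<Sum>l\<in>{1..K}. M l (fst p) (snd p) * (g (fst q) (ys l) (snd q) - g (fst q) (ys 0) (snd q)))"
    for p q :: "'d \<times> nat"
  define e where "e p = (\<Sum>l\<in>{1..K}. M l (fst p) (snd p) * \<kappa> l)" for p :: "'d \<times> nat"
  have TB: "\<forall>p\<in>P. \<forall>z. T (fst p) (z $ fst p) (snd p) = (\<Sum>q\<in>Q. B p q * H (fst q) (w z $ fst q) (snd q)) + e p"
    using T_as_B[OF E Minv] unfolding P_def Q_def B_def e_def .
  have Bker: "\<And>\<eta>. (\<forall>q\<in>Q. (\<Sum>p\<in>P. \<eta> p * B p q) = 0) \<Longrightarrow> \<forall>p\<in>P. \<eta> p = 0"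
    using B_ker[OF T_strong] TB unfolding P_def Q_def by blast
  have fP: "finite P" and fQ: "finite Q" unfolding P_def Q_def by (simp_all add: finite_SigmaI)
  have cPQ: "card P = card Q" unfolding P_def Q_def by (rule card_PQ[OF \<sigma>])
  obtain C where BC: "\<forall>p\<in>P. \<forall>p'\<in>P. (\<Sum>q\<in>Q. B p q * C q p') = (if p = p' then 1 else 0)"
    and CB: "\<forall>q\<in>Q. \<forall>q'\<in>Q. (\<Sum>p\<in>P. C q p * B p q') = (if q = q' then 1 else 0)"
    using LA_inverse[OF fP fQ cPQ Bker] by blast
  define b where "b q = - (\<Sum>p\<in>P. C q p * e p)" for q
  have HC: "\<forall>q\<in>Q. \<forall>z. H (fst q) (w z $ fst q) (snd q) = (\<Sum>p\<in>P. C q p * T (fst p) (z $ fst p) (snd p)) + b q"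
  proof (intro ballI allI)
    fix q z assume q: "q \<in> Q"
    define Hf where "Hf q' = H (fst q') (w z $ fst q') (snd q')" for q'
    have "(\<Sum>p\<in>P. C q p * T (fst p) (z $ fst p) (snd p)) = (\<Sum>p\<in>P. C q p * ((\<Sum>q'\<in>Q. B p q' * Hf q') + e p))"
      using TB unfolding Hf_def by (intro sum.cong refl) auto
    also have "\<dots> = (\<Sum>p\<in>P. \<Sum>q'\<in>Q. C q p * B p q' * Hf q') + (\<Sum>p\<in>P. C q p * e p)"
      by (simp add: distrib_left sum.distrib sum_distrib_left mult.assoc)
    also have "(\<Sum>p\<in>P. \<Sum>q'\<in>Q. C q p * B p q' * Hf q') = (\<Sum>q'\<in>Q. \<Sum>p\<in>P. C q p * B p q' * Hf q')"
      by (rule sum.swap)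
    also have "\<dots> = (\<Sum>q'\<in>Q. (\<Sum>p\<in>P. C q p * B p q') * Hf q')"
      by (simp add: sum_distrib_right)
    also have "(\<Sum>q'\<in>Q. (\<Sum>p\<in>P. C q p * B p q') * Hf q') = (\<Sum>q'\<in>Q. Hf q' * (if q' = q then 1 else 0))"
    proof (intro sum.cong refl)
      fix q' assume q': "q' \<in> Q"
      have "(\<Sum>p\<in>P. C q p * B p q') = (if q = q' then 1 else 0)" using CB q q' by blast
      then show "(\<Sum>p\<in>P. C q p * B p q') * Hf q' = Hf q' * (if q' = q then 1 else 0)" by auto
    qed
    also have "\<dots> = Hf q" using sum_delta_P[OF fQ q] .
    finally show "H (fst q) (w z $ fst q) (snd q) = (\<Sum>p\<in>P. C q p * T (fst p) (z $ fst p) (snd p)) + b q"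
      unfolding b_def Hf_def by simp
  qed
  have Cker: "\<forall>\<eta>. (\<forall>p\<in>P. (\<Sum>q\<in>Q. \<eta> q * C q p) = 0) \<longrightarrow> (\<forall>q\<in>Q. \<eta> q = 0)"
  proof (intro allI impI ballI)
    fix \<eta> q' assume z: "\<forall>p\<in>P. (\<Sum>q\<in>Q. \<eta> q * C q p) = 0" and q': "q' \<in> Q"
    have "\<eta> q' = (\<Sum>q\<in>Q. \<eta> q * (if q = q' then 1 else 0))" using sum_delta_P[OF fQ q'] by simp
    also have "\<dots> = (\<Sum>q\<in>Q. \<eta> q * (\<Sum>p\<in>P. C q p * B p q'))"
    proof (intro sum.cong refl)
      fix q assume q: "q \<in> Q"
      have "(\<Sum>p\<in>P. C q p * B p q') = (if q = q' then 1 else 0)" using CB q q' by blast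
      then show "\<eta> q * (if q = q' then 1 else 0) = \<eta> q * (\<Sum>p\<in>P. C q p * B p q')" by simp
    qed
    also have "\<dots> = (\<Sum>q\<in>Q. \<Sum>p\<in>P. \<eta> q * C q p * B p q')"
      by (simp add: sum_distrib_left mult.assoc)
    also have "\<dots> = (\<Sum>p\<in>P. \<Sum>q\<in>Q. \<eta> q * C q p * B p q')"
      by (rule sum.swap)
    also have "\<dots> = (\<Sum>p\<in>P. (\<Sum>q\<in>Q. \<eta> q * C q p) * B p q')"
      by (simp add: sum_distrib_right)
    also have "\<dots> = 0" using z by simp
    finally show "\<eta> q' = 0" .
  qed
  have HCi: "\<forall>z. H i (w z $ i) j = (\<Sum>p\<in>(SIGMA c:UNIV. {..<k c}). C (i,j) p * T (fst p) (z $ fst p) (snd p)) + b (i,j)"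
    if "j < m i" for i j using HC that unfolding P_def Q_def by auto
  have wdiff: "\<forall>x. w differentiable (at x)" unfolding w_def
    using hd fd by (auto intro: differentiable_compose)
  define Dw where "Dw i z a = deriv (\<lambda>t. w (z + t *\<^sub>R axis a 1) $ i) 0" for i z a
  have Dwd: "((\<lambda>t. w (z + t *\<^sub>R axis a 1) $ i) has_real_derivative Dw i z a) (at 0)" for i z a
    unfolding Dw_def using line_diff[OF wdiff] by (simp add: DERIV_deriv_iff_real_differentiable)
  have ident: "Hd i j (w z $ i) * Dw i z a = (\<Sum>l<k a. C (i,j) (a,l) * Td a l (z $ a))"
    if "j < m i" for i j z a
  proof -
    have hd': "\<forall>u. ((\<lambda>v. H i v j) has_real_derivative Hd i j u) (at u)" using Hdr that by blast
    show ?thesis using deriv_identity[where H=H and i=i and j=j and w=w and k=k and C=C and T=T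
        and b="b (i,j)" and Hd="Hd i j" and Td=Td and z=z and a=a and Dw="Dw i z a", OF HCi[OF that] hd' Td Dwd[of z a i]] .
  qed
  have blocks: "\<forall>i. \<exists>c. \<forall>a. a \<noteq> c \<longrightarrow> (\<forall>j<m i. \<forall>l<k a. C (i,j) (a,l) = 0)"
  proof
    fix i
    show "\<exists>c. \<forall>a. a \<noteq> c \<longrightarrow> (\<forall>j<m i. \<forall>l<k a. C (i,j) (a,l) = 0)"
    proof (cases "\<forall>l. k l \<ge> 2")
      case True
      have mi: "m i \<ge> 2" using True \<sigma> by simp
      show ?thesis
        by (rule caseA_block[where m=m and i=i and k=k and T=T and Td=Td and C=C
              and Psi="\<lambda>z j. Hd i j (w z $ i)" and D="Dw i", OF mi T_strong Td])
           (use ident Cker in \<open>auto simp: P_def Q_def\<close>)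
    next
      case False
      then have B: "(\<forall>l. k l = 1) \<and> C1_diffeo h \<and> C1_diffeo f \<and> (\<forall>l. has_unique_extremum (\<lambda>v. H l v 0))"
        using cases by auto
      then have k1: "\<forall>l. k l = 1" by blast
      have mi: "m i = 1" using k1 \<sigma> by simp
      obtain u where u: "is_local_extremum (\<lambda>v. H i v 0) u"
        using B unfolding has_unique_extremum_def by blast
      have Hd0: "Hd i 0 u = 0"
      proof -
        have d: "((\<lambda>v. H i v 0) has_real_derivative Hd i 0 u) (at u)" using Hdr mi by simp
        from u consider (mx) e where "e > 0" "\<forall>v. \<bar>v - u\<bar> < e \<longrightarrow> H i v 0 \<le> H i u 0"
          | (mn) e where "e > 0" "\<forall>v. \<bar>v - u\<bar> < e \<longrightarrow> H i u 0 \<le> H i v 0"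
          unfolding is_local_extremum_def by blast
        then show ?thesis
        proof cases
          case mx then show ?thesis using DERIV_local_max[OF d, of e] by (simp add: abs_minus_commute)
        next
          case mn then show ?thesis using DERIV_local_min[OF d, of e] by (simp add: abs_minus_commute)
        qed
      qed
      have C1h: "C1_diffeo h" and C1f: "C1_diffeo f" using B by auto
      define winv where "winv x = inv h (inv f x)" for x
      have bf: "bij f" using C1f unfolding C1_diffeo_def by blast
      have winv: "\<forall>x. w (winv x) = x" unfolding w_def winv_def
        using h_inv bf by (simp add: bij_is_surj surj_f_inv_f)
      have ific: "continuous_on UNIV (inv f)"
        using C1f unfolding C1_diffeo_def by (auto dest: C1_diff intro: diff_cont)
      have winvc: "continuous_on UNIV winv" unfolding winv_def
        using continuous_on_compose[OF ific, of "inv h"] hic by (simp add: comp_def continuous_on_subset)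
      have winj: "inj winv" unfolding winv_def
        using bij_imp_bij_inv[OF h_inv] bij_imp_bij_inv[OF bf]
        by (simp add: bij_is_inj inj_compose[unfolded comp_def])
      have Td0: "\<forall>a. \<forall>t. ((\<lambda>v. T a v 0) has_real_derivative Td a 0 t) (at t)" using Td k1 by simp
      have ident0: "\<forall>z a. w z $ i = u \<longrightarrow> C (i,0) (a,0) * Td a 0 (z $ a) = 0"
      proof (intro allI impI)
        fix z a assume wz: "w z $ i = u"
        have "Hd i 0 (w z $ i) * Dw i z a = C (i,0) (a,0) * Td a 0 (z $ a)" using ident[of 0 i z a] mi k1 by simp
        then show "C (i,0) (a,0) * Td a 0 (z $ a) = 0" using wz Hd0 by simp
      qed
      obtain c where c: "\<forall>a. a \<noteq> c \<longrightarrow> C (i,0) (a,0) = 0"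
        using caseB_block[where k=k and T=T and Td="\<lambda>a. Td a 0" and C=C and i=i and u=u and w=w and winv=winv,
            OF k1 T_strong Td0 ident0 winv winvc winj] by blast
      show ?thesis using c mi k1 by auto
    qed
  qed
  have hinv: "\<forall>x. h (inv h x) = x" using h_inv by (simp add: bij_is_surj surj_f_inv_f)
  have BC': "\<forall>p\<in>(SIGMA c:UNIV. {..<k c}). \<forall>p'\<in>(SIGMA c:UNIV. {..<k c}).
                  (\<Sum>q\<in>(SIGMA c:UNIV. {..<m c}). B p q * C q p') = (if p = p' then 1 else 0)"
    using BC unfolding P_def Q_def .
  have CB': "\<forall>q\<in>(SIGMA c:UNIV. {..<m c}). \<forall>q'\<in>(SIGMA c:UNIV. {..<m c}).
                  (\<Sum>p\<in>(SIGMA c:UNIV. {..<k c}). C q p * B p q') = (if q = q' then 1 else 0)"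
    using CB unfolding P_def Q_def .
  have HC': "\<forall>q\<in>(SIGMA c:UNIV. {..<m c}). \<forall>z. H (fst q) (f (h z) $ fst q) (snd q)
               = (\<Sum>p\<in>(SIGMA c:UNIV. {..<k c}). C q p * T (fst p) (z $ fst p) (snd p)) + b q"
    using HC unfolding P_def Q_def w_def .
  show ?thesis by (rule assemble[OF BC' CB' blocks kpos HC' hinv])
qed


end
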